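(* Let the language contain a constant and let $t_1,t_2,\dots$ be a fixed enumeration of all closed terms. Let $E$ be a sentence containing only weak quantifier occurrences. Then $\models_1 E$ iff some expansion $E_n$ of $E$ is valid, i.e. $\models_1 E_n$ (a Herbrand expansion).
   Context: The propositional setting is as follows. - A lattice-oriented signature $\mathcal{L}$ is a finite set of connectives. Each connective $c$ has an arity $n_c$ and a polarity $p_c:\{1,\dots,n_c\}\to\{-,+\}$. It includes binary $\lor,\land,\to$ with $p_\lor\equiv p_\land\equiv +$, $p_\to(1)=-$ and $p_\to(2)=+$. - A finite $\mathcal{L}$-lattice $\mathbf{A}$ is a finite set $L$ with operations $c^L$ such that $(L,\lor^L,\land^L)$ is a lattice with order $\le$ and top $1$. Each $c^L$ is monotone in the arguments with polarity $+$ and antitone in those with polarity $-$. Moreover $1\le a\to b$ iff $a\le b$. The first-order setting is as follows. - Fix a finite $\mathcal{L}$-lattice $\mathbf{A}$ and a predicate language with predicate and function symbols of given arities. - Terms and formulas are built as usual from object variables using the connectives of $\mathcal{L}$ and the quantifiers $\forall,\exists$. - A structure consists of a nonempty set $S$, maps $P^S:S^n\to L$ for the $n$-ary predicate symbols, and maps $f^S:S^n\to S$ for the $n$-ary function symbols. - An evaluation $v$ maps variables to $S$. Formulas get values in $L$: connectives are interpreted by $c^L$; $\|\forall x\varphi\|_v=\bigwedge_{a\in S}\|\varphi\|_{v[x\to a]}$ and $\|\exists x\varphi\|_v=\bigvee_{a\in S}\|\varphi\|_{v[x\to a]}$. - $\models_1 C$ means $\|C\|_v=1$ for every structure and every evaluation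 $v$. - An occurrence in a formula is positive or negative: the whole formula is positive, and going into argument $i$ of a connective $c$ keeps the polarity if $p_c(i)=+$ and flips it if $p_c(i)=-$. Quantifiers do not change polarity. - Weak quantifier occurrences are positive occurrences of $\exists$ and negative occurrences of $\forall$; strong ones are positive $\forall$ and negative $\exists$. - The $n$-th expansion $E_n$ of $E$ is obtained by replacing, from the inside out, every subformula $\exists xA(x)$ by $\bigvee_{i=1}^nA(t_i)$ and every subformula $\forall xA(x)$ by $\bigwedge_{i=1}^nA(t_i)$. *)

theory Defs
  imports Main
begin

text \<open>Connectives are elements of a type 'c, with arity ar and polarity pol;
  pol c i = True means polarity + for argument i (arguments indexed from 0).
  cor, cand, cimp are the distinguished binary connectives.\<close>

definition lo_signature ::
  "('c \<Rightarrow> nat) \<Rightarrow> ('c \<Rightarrow> nat \<Rightarrow> bool) \<Rightarrow> 'c \<Rightarrow> 'c \<Rightarrow> 'c \<Rightarrow> bool" where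
  "lo_signature ar pol cor cand cimp \<longleftrightarrow>
     finite (UNIV :: 'c set) \<and> distinct [cor, cand, cimp] \<and>
     ar cor = 2 \<and> ar cand = 2 \<and> ar cimp = 2 \<and>
     pol cor 0 \<and> pol cor 1 \<and> pol cand 0 \<and> pol cand 1 \<and>
     \<not> pol cimp 0 \<and> pol cimp 1"

definition L_lattice ::
  "('c \<Rightarrow> nat) \<Rightarrow> ('c \<Rightarrow> nat \<Rightarrow> bool) \<Rightarrow> 'c \<Rightarrow> 'c \<Rightarrow> 'c
   \<Rightarrow> ('c \<Rightarrow> 'a::{finite,complete_lattice} list \<Rightarrow> 'a) \<Rightarrow> bool" where
  "L_lattice ar pol cor cand cimp ops \<longleftrightarrow>
     (\<forall>a b. ops cor [a, b] = sup a b) \<and>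
     (\<forall>a b. ops cand [a, b] = inf a b) \<and>
     (\<forall>c xs i a b. length xs = ar c \<and> i < ar c \<and> a \<le> b \<longrightarrow>
        (if pol c i then ops c (xs[i := a]) \<le> ops c (xs[i := b])
                    else ops c (xs[i := b]) \<le> ops c (xs[i := a]))) \<and>
     (\<forall>a b. top \<le> ops cimp [a, b] \<longleftrightarrow> a \<le> b)"

datatype 'f trm = Var nat | Fn 'f "'f trm list"

datatype ('c, 'p, 'f) fm =
    Atom 'p "'f trm list"
  | Conn 'c "('c, 'p, 'f) fm list"
  | All nat "('c, 'p, 'f) fm"
  | Ex nat "('c, 'p, 'f) fm"

fun wf_trm :: "('f \<Rightarrow> nat) \<Rightarrow> 'f trm \<Rightarrow> bool" where
  "wf_trm fa (Var x) = True"
| "wf_trm fa (Fn f ts) = (length ts = fa f \<and> (\<forall>s\<in>set ts. wf_trm fa s))"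

fun tvars :: "'f trm \<Rightarrow> nat set" where
  "tvars (Var x) = {x}"
| "tvars (Fn f ts) = (\<Union>s\<in>set ts. tvars s)"

definition closed_trm :: "'f trm \<Rightarrow> bool" where
  "closed_trm s \<longleftrightarrow> tvars s = {}"

fun wf_fm :: "('c \<Rightarrow> nat) \<Rightarrow> ('f \<Rightarrow> nat) \<Rightarrow> ('p \<Rightarrow> nat) \<Rightarrow> ('c, 'p, 'f) fm \<Rightarrow> bool" where
  "wf_fm ar fa pa (Atom p ts) = (length ts = pa p \<and> (\<forall>s\<in>set ts. wf_trm fa s))"
| "wf_fm ar fa pa (Conn c fs) = (length fs = ar c \<and> (\<forall>\<phi>\<in>set fs. wf_fm ar fa pa \<phi>))"
| "wf_fm ar fa pa (All x \<phi>) = wf_fm ar fa pa \<phi>"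
| "wf_fm ar fa pa (Ex x \<phi>) = wf_fm ar fa pa \<phi>"

fun fvars :: "('c, 'p, 'f) fm \<Rightarrow> nat set" where
  "fvars (Atom p ts) = (\<Union>s\<in>set ts. tvars s)"
| "fvars (Conn c fs) = (\<Union>\<phi>\<in>set fs. fvars \<phi>)"
| "fvars (All x \<phi>) = fvars \<phi> - {x}"
| "fvars (Ex x \<phi>) = fvars \<phi> - {x}"

definition sentence :: "('c, 'p, 'f) fm \<Rightarrow> bool" where
  "sentence E \<longleftrightarrow> fvars E = {}"

text \<open>only_weak pol b \<phi>: every quantifier occurrence in \<phi> is weak, where
  b = True means that \<phi> itself occurs positively. Weak: positive Ex,
  negative All.\<close>

fun only_weak :: "('c \<Rightarrow> nat \<Rightarrow> bool) \<Rightarrow> bool \<Rightarrow> ('c, 'p, 'f) fm \<Rightarrow> bool"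
and only_weak_args :: "('c \<Rightarrow> nat \<Rightarrow> bool) \<Rightarrow> 'c \<Rightarrow> nat \<Rightarrow> bool \<Rightarrow> ('c, 'p, 'f) fm list \<Rightarrow> bool" where
  "only_weak pol b (Atom p ts) = True"
| "only_weak pol b (Conn c fs) = only_weak_args pol c 0 b fs"
| "only_weak pol b (Ex x \<phi>) = (b \<and> only_weak pol b \<phi>)"
| "only_weak pol b (All x \<phi>) = ((\<not> b) \<and> only_weak pol b \<phi>)"
| "only_weak_args pol c i b [] = True"
| "only_weak_args pol c i b (\<phi> # fs) =
     (only_weak pol (if pol c i then b else \<not> b) \<phi> \<and> only_weak_args pol c (Suc i) b fs)"

fun tsubst :: "nat \<Rightarrow> 'f trm \<Rightarrow> 'f trm \<Rightarrow> 'f trm" where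
  "tsubst x s (Var y) = (if x = y then s else Var y)"
| "tsubst x s (Fn f ts) = Fn f (map (tsubst x s) ts)"

text \<open>Substitution of a term for the free occurrences of x (only used with closed terms).\<close>

fun subst :: "nat \<Rightarrow> 'f trm \<Rightarrow> ('c, 'p, 'f) fm \<Rightarrow> ('c, 'p, 'f) fm" where
  "subst x s (Atom p ts) = Atom p (map (tsubst x s) ts)"
| "subst x s (Conn c fs) = Conn c (map (subst x s) fs)"
| "subst x s (All y \<phi>) = (if x = y then All y \<phi> else All y (subst x s \<phi>))"
| "subst x s (Ex y \<phi>) = (if x = y then Ex y \<phi> else Ex y (subst x s \<phi>))"

fun big_conn :: "'c \<Rightarrow> ('c, 'p, 'f) fm list \<Rightarrow> ('c, 'p, 'f) fm" where
  "big_conn c [] = Conn c []"  (* never used: expansions are taken with n \<ge> 1 *)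
| "big_conn c [\<phi>] = \<phi>"
| "big_conn c (\<phi> # \<psi> # fs) = Conn c [\<phi>, big_conn c (\<psi> # fs)]"

fun expand :: "'c \<Rightarrow> 'c \<Rightarrow> (nat \<Rightarrow> 'f trm) \<Rightarrow> nat \<Rightarrow> ('c, 'p, 'f) fm \<Rightarrow> ('c, 'p, 'f) fm" where
  "expand cor cand t n (Atom p ts) = Atom p ts"
| "expand cor cand t n (Conn c fs) = Conn c (map (expand cor cand t n) fs)"
| "expand cor cand t n (Ex x \<phi>) =
     big_conn cor (map (\<lambda>i. subst x (t i) (expand cor cand t n \<phi>)) [1..<Suc n])"
| "expand cor cand t n (All x \<phi>) =
     big_conn cand (map (\<lambda>i. subst x (t i) (expand cor cand t n \<phi>)) [1..<Suc n])"

fun teval :: "('f \<Rightarrow> 'u list \<Rightarrow> 'u) \<Rightarrow> (nat \<Rightarrow> 'u) \<Rightarrow> 'f trm \<Rightarrow> 'u" where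
  "teval F v (Var x) = v x"
| "teval F v (Fn f ts) = F f (map (teval F v) ts)"

fun eval :: "('c \<Rightarrow> 'a::complete_lattice list \<Rightarrow> 'a) \<Rightarrow> 'u set \<Rightarrow> ('p \<Rightarrow> 'u list \<Rightarrow> 'a)
    \<Rightarrow> ('f \<Rightarrow> 'u list \<Rightarrow> 'u) \<Rightarrow> (nat \<Rightarrow> 'u) \<Rightarrow> ('c, 'p, 'f) fm \<Rightarrow> 'a" where
  "eval ops S P F v (Atom p ts) = P p (map (teval F v) ts)"
| "eval ops S P F v (Conn c fs) = ops c (map (eval ops S P F v) fs)"
| "eval ops S P F v (All x \<phi>) = Inf ((\<lambda>a. eval ops S P F (v(x := a)) \<phi>) ` S)"
| "eval ops S P F v (Ex x \<phi>) = Sup ((\<lambda>a. eval ops S P F (v(x := a)) \<phi>) ` S)"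

definition is_structure :: "('f \<Rightarrow> nat) \<Rightarrow> 'u set \<Rightarrow> ('f \<Rightarrow> 'u list \<Rightarrow> 'u) \<Rightarrow> bool" where
  "is_structure fa S F \<longleftrightarrow> S \<noteq> {} \<and>
     (\<forall>f us. length us = fa f \<and> set us \<subseteq> S \<longrightarrow> F f us \<in> S)"

definition valid1 :: "'u itself \<Rightarrow> ('c \<Rightarrow> 'a::complete_lattice list \<Rightarrow> 'a) \<Rightarrow> ('f \<Rightarrow> nat)
    \<Rightarrow> ('c, 'p, 'f) fm \<Rightarrow> bool" where
  "valid1 U ops fa E \<longleftrightarrow>
     (\<forall>(S :: 'u set) (P :: 'p \<Rightarrow> 'u list \<Rightarrow> 'a) F v.
        is_structure fa S F \<and> range v \<subseteq> S \<longrightarrow> eval ops S P F v E = top)"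

end

theory Submission
  imports Defs
begin

fun atoms :: "('c, 'p, 'f) fm \<Rightarrow> ('p \<times> 'f trm list) set" where
  "atoms (Atom p ts) = {(p, ts)}"
| "atoms (Conn c fs) = (\<Union>\<phi>\<in>set fs. atoms \<phi>)"
| "atoms (All x \<phi>) = atoms \<phi>"
| "atoms (Ex x \<phi>) = atoms \<phi>"

fun qf :: "('c, 'p, 'f) fm \<Rightarrow> bool" where
  "qf (Atom p ts) = True"
| "qf (Conn c fs) = (\<forall>\<phi>\<in>set fs. qf \<phi>)"
| "qf (All x \<phi>) = False"
| "qf (Ex x \<phi>) = False"

lemma finite_atoms: "finite (atoms \<phi>)"
  by (induction \<phi>) auto

lemma teval_tsubst: "teval F v (tsubst x s r) = teval F (v(x := teval F v s)) r"
  by (induction r) (auto simp: map_eq_conv intro!: arg_cong[where f="F _"])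

lemma teval_cong: "(\<forall>x\<in>tvars s. v x = w x) \<Longrightarrow> teval F v s = teval F w s"
  by (induction s) (auto simp: map_eq_conv intro!: arg_cong[where f="F _"])

lemma eval_subst: "qf \<psi> \<Longrightarrow> eval ops S P F v (subst x s \<psi>) = eval ops S P F (v(x := teval F v s)) \<psi>"
  by (induction \<psi>) (auto simp: teval_tsubst comp_def intro!: arg_cong[where f="ops _"])

lemma qf_subst: "qf \<psi> \<Longrightarrow> qf (subst x s \<psi>)"
  by (induction \<psi>) auto

lemma atoms_subst: "qf \<psi> \<Longrightarrow> atoms (subst x s \<psi>) = (\<lambda>(p,ts). (p, map (tsubst x s) ts)) ` atoms \<psi>"
  by (induction \<psi>) auto

lemma qf_big_conn: "\<forall>\<phi>\<in>set fs. qf \<phi> \<Longrightarrow> qf (big_conn c fs)"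
  by (induction c fs rule: big_conn.induct) auto

lemma atoms_big_conn: "atoms (big_conn c fs) = (\<Union>\<phi>\<in>set fs. atoms \<phi>)"
  by (induction c fs rule: big_conn.induct) auto

lemma qf_expand: "qf (expand cor cand t n \<phi>)"
  by (induction \<phi>) (auto intro!: qf_big_conn qf_subst)

lemma eval_qf_cong:
  "qf \<psi> \<Longrightarrow> (\<forall>(p,ts)\<in>atoms \<psi>. P p (map (teval F v) ts) = P' p (map (teval F' v') ts))
   \<Longrightarrow> eval ops S P F v \<psi> = eval ops S' P' F' v' \<psi>"
  by (induction \<psi>) (auto intro!: arg_cong[where f="ops _"])

lemma eval_big_sup:
  assumes "\<forall>a b. ops cor [a, b] = sup a b" "fs \<noteq> []"
  shows "eval ops S P F v (big_conn cor fs) = Sup (eval ops S P F v ` set fs)"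
  using assms(2) by (induction fs rule: induct_list012) (auto simp: assms(1))

lemma eval_big_inf:
  assumes "\<forall>a b. ops cand [a, b] = inf a b" "fs \<noteq> []"
  shows "eval ops S P F v (big_conn cand fs) = Inf (eval ops S P F v ` set fs)"
  using assms(2) by (induction fs rule: induct_list012) (auto simp: assms(1))

lemma eval_expand_Ex:
  assumes "\<forall>a b. ops cor [a, b] = sup a b" "n \<ge> 1"
  shows "eval ops S P F v (expand cor cand t n (Ex x \<phi>)) =
    Sup ((\<lambda>i. eval ops S P F (v(x := teval F v (t i))) (expand cor cand t n \<phi>)) ` {1..n})"
proof -
  have e: "eval ops S P F v (expand cor cand t n (Ex x \<phi>)) = Sup (eval ops S P F v ` set (map (\<lambda>i. subst x (t i) (expand cor cand t n \<phi>)) [1..<Suc n]))"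
    by (simp only: expand.simps) (rule eval_big_sup[where ops=ops and cor=cor, OF assms(1)], use assms(2) in simp)
  show ?thesis
    by (simp only: e set_map atLeastLessThanSuc_atLeastAtMost set_upt image_image eval_subst[OF qf_expand])
qed

lemma eval_expand_All:
  assumes "\<forall>a b. ops cand [a, b] = inf a b" "n \<ge> 1"
  shows "eval ops S P F v (expand cor cand t n (All x \<phi>)) =
    Inf ((\<lambda>i. eval ops S P F (v(x := teval F v (t i))) (expand cor cand t n \<phi>)) ` {1..n})"
proof -
  have e: "eval ops S P F v (expand cor cand t n (All x \<phi>)) = Inf (eval ops S P F v ` set (map (\<lambda>i. subst x (t i) (expand cor cand t n \<phi>)) [1..<Suc n]))"
    by (simp only: expand.simps) (rule eval_big_inf[where ops=ops and cand=cand, OF assms(1)], use assms(2) in simp)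
  show ?thesis
    by (simp only: e set_map atLeastLessThanSuc_atLeastAtMost set_upt image_image eval_subst[OF qf_expand])
qed

lemma ops_mono:
  assumes L: "L_lattice ar pol cor cand cimp ops"
    and len: "length xs = ar c" "length ys = ar c"
    and le: "\<forall>i<ar c. if pol c i then xs!i \<le> ys!i else ys!i \<le> xs!i"
  shows "ops c xs \<le> ops c ys"
proof -
  have M: "\<And>zs i a b. length zs = ar c \<Longrightarrow> i < ar c \<Longrightarrow> a \<le> b \<Longrightarrow>
        (if pol c i then ops c (zs[i := a]) \<le> ops c (zs[i := b])
                    else ops c (zs[i := b]) \<le> ops c (zs[i := a]))"
    using L unfolding L_lattice_def by blast
  define z where "z k = take k ys @ drop k xs" for k
  have zl: "length (z k) = ar c" if "k \<le> ar c" for k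
    using that len by (simp add: z_def)
  have zS: "z (Suc k) = (z k)[k := ys!k]" if "k < ar c" for k
    using that len unfolding z_def
    by (intro nth_equalityI) (auto simp: nth_append nth_list_update min_def take_Suc_conv_app_nth)
  have zk: "z k = (z k)[k := xs!k]" if "k < ar c" for k
    using that len unfolding z_def
    by (intro nth_equalityI) (auto simp: nth_append nth_list_update min_def)
  have "k \<le> ar c \<Longrightarrow> ops c xs \<le> ops c (z k)" for k
  proof (induction k)
    case 0 then show ?case by (simp add: z_def)
  next
    case (Suc k)
    then have k: "k < ar c" by simp
    have "ops c (z k) \<le> ops c (z (Suc k))"
    proof (cases "pol c k")
      case True
      then have "xs!k \<le> ys!k" using le k by auto
      from M[OF zl k this] True k show ?thesis
        by (metis Suc.prems Suc_leD zS zk)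
    next
      case False
      then have "ys!k \<le> xs!k" using le k by auto
      from M[OF zl k this] False k show ?thesis
        by (metis Suc.prems Suc_leD zS zk)
    qed
    with Suc show ?case by (meson Suc_leD order_trans)
  qed
  from this[of "ar c"] show ?thesis using len by (simp add: z_def)
qed

lemma only_weak_args_nth:
  "only_weak_args pol c k b fs \<Longrightarrow> i < length fs \<Longrightarrow>
   only_weak pol (if pol c (k + i) then b else \<not> b) (fs!i)"
proof (induction fs arbitrary: k i)
  case Nil then show ?case by simp
next
  case (Cons a fs)
  show ?case
  proof (cases i)
    case 0 then show ?thesis using Cons.prems by simp
  next
    case (Suc j)
    with Cons.prems have "only_weak_args pol c (Suc k) b fs" "j < length fs" by auto
    from Cons.IH[OF this] show ?thesis using Suc by simp
  qed
qed

lemma teval_in_S: "is_structure fa S F \<Longrightarrow> wf_trm fa s \<Longrightarrow> range v \<subseteq> S \<Longrightarrow> teval F v s \<in> S"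
proof (induction s)
  case (Var x) then show ?case by auto
next
  case (Fn f ts)
  then have "set (map (teval F v) ts) \<subseteq> S" "length (map (teval F v) ts) = fa f" by auto
  then show ?case using Fn.prems(1) by (auto simp: is_structure_def)
qed

lemma L_sup: "L_lattice ar pol cor cand cimp ops \<Longrightarrow> \<forall>a b. ops cor [a, b] = sup a b"
  and L_inf: "L_lattice ar pol cor cand cimp ops \<Longrightarrow> \<forall>a b. ops cand [a, b] = inf a b"
  by (auto simp: L_lattice_def)

lemma sound:
  assumes L: "L_lattice ar pol cor cand cimp ops" and S: "is_structure fa S F"
    and T: "\<forall>i\<ge>1. wf_trm fa (t i)" and n: "n \<ge> 1"
  shows "only_weak pol b \<phi> \<Longrightarrow> wf_fm ar fa pa \<phi> \<Longrightarrow> range v \<subseteq> S \<Longrightarrow>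
   (if b then eval ops S P F v (expand cor cand t n \<phi>) \<le> eval ops S P F v \<phi>
    else eval ops S P F v \<phi> \<le> eval ops S P F v (expand cor cand t n \<phi>))"
proof (induction \<phi> arbitrary: b v)
  case (Atom p ts)
  then show ?case by simp
next
  case (Conn c fs)
  have len: "length fs = ar c" using Conn.prems by simp
  have H: "if (if pol c i then b else \<not> b)
          then eval ops S P F v (expand cor cand t n (fs!i)) \<le> eval ops S P F v (fs!i)
          else eval ops S P F v (fs!i) \<le> eval ops S P F v (expand cor cand t n (fs!i))"
    if i: "i < ar c" for i
  proof -
    have ow: "only_weak pol (if pol c i then b else \<not> b) (fs!i)"
      using only_weak_args_nth[of pol c 0 b fs i] Conn.prems(1) i len by simp
    have "fs!i \<in> set fs" using i len by simp
    moreover have "wf_fm ar fa pa (fs!i)" using Conn.prems(2) i len by simp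
    ultimately show ?thesis using Conn.IH ow Conn.prems(3) by blast
  qed
  show ?case
  proof (cases b)
    case True
    have "ops c (map (\<lambda>\<phi>. eval ops S P F v (expand cor cand t n \<phi>)) fs) \<le> ops c (map (eval ops S P F v) fs)"
      by (rule ops_mono[OF L]) (use len H True in \<open>auto split: if_splits\<close>)
    then show ?thesis using True by (simp add: comp_def)
  next
    case False
    have "ops c (map (eval ops S P F v) fs) \<le> ops c (map (\<lambda>\<phi>. eval ops S P F v (expand cor cand t n \<phi>)) fs)"
      by (rule ops_mono[OF L]) (use len H False in \<open>auto split: if_splits\<close>)
    then show ?thesis using False by (simp add: comp_def)
  qed
next
  case (Ex x \<phi>)
  then have b: b and ow: "only_weak pol b \<phi>" and wf: "wf_fm ar fa pa \<phi>" by auto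
  have "(SUP i\<in>{1..n}. eval ops S P F (v(x := teval F v (t i))) (expand cor cand t n \<phi>))
        \<le> (SUP a\<in>S. eval ops S P F (v(x := a)) \<phi>)"
  proof (rule SUP_least)
    fix i assume i: "i \<in> {1..n}"
    have tS: "teval F v (t i) \<in> S" using teval_in_S[OF S] T i Ex.prems(3) by auto
    have "range (v(x := teval F v (t i))) \<subseteq> S" using tS Ex.prems(3) by auto
    then have "eval ops S P F (v(x := teval F v (t i))) (expand cor cand t n \<phi>)
       \<le> eval ops S P F (v(x := teval F v (t i))) \<phi>" using Ex.IH[OF ow wf] b by auto
    also have "\<dots> \<le> (SUP a\<in>S. eval ops S P F (v(x := a)) \<phi>)" using tS by (rule SUP_upper)
    finally show "eval ops S P F (v(x := teval F v (t i))) (expand cor cand t n \<phi>)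
       \<le> (SUP a\<in>S. eval ops S P F (v(x := a)) \<phi>)" .
  qed
  then show ?case using b by (simp del: expand.simps add: eval_expand_Ex[where ops=ops and cor=cor, OF L_sup[OF L] n])
next
  case (All x \<phi>)
  then have b: "\<not> b" and ow: "only_weak pol b \<phi>" and wf: "wf_fm ar fa pa \<phi>" by auto
  have "(INF a\<in>S. eval ops S P F (v(x := a)) \<phi>) \<le>
        (INF i\<in>{1..n}. eval ops S P F (v(x := teval F v (t i))) (expand cor cand t n \<phi>))"
  proof (rule INF_greatest)
    fix i assume i: "i \<in> {1..n}"
    have tS: "teval F v (t i) \<in> S" using teval_in_S[OF S] T i All.prems(3) by auto
    have "range (v(x := teval F v (t i))) \<subseteq> S" using tS All.prems(3) by auto
    then have "eval ops S P F (v(x := teval F v (t i))) \<phi> \<le>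
       eval ops S P F (v(x := teval F v (t i))) (expand cor cand t n \<phi>)" using All.IH[OF ow wf] b by auto
    have "(INF a\<in>S. eval ops S P F (v(x := a)) \<phi>) \<le> eval ops S P F (v(x := teval F v (t i))) \<phi>"
      using tS by (rule INF_lower)
    also have "\<dots> \<le> eval ops S P F (v(x := teval F v (t i))) (expand cor cand t n \<phi>)" by fact
    finally show "(INF a\<in>S. eval ops S P F (v(x := a)) \<phi>) \<le>
       eval ops S P F (v(x := teval F v (t i))) (expand cor cand t n \<phi>)" .
  qed
  then show ?case using b by (simp del: expand.simps add: eval_expand_All[where ops=ops and cand=cand, OF L_inf[OF L] n])
qed

lemma mono_n:
  assumes L: "L_lattice ar pol cor cand cimp ops" and m: "m \<ge> 1" "m \<le> n"
  shows "only_weak pol b \<phi> \<Longrightarrow> wf_fm ar fa pa \<phi> \<Longrightarrow>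
   (if b then eval ops S P F v (expand cor cand t m \<phi>) \<le> eval ops S P F v (expand cor cand t n \<phi>)
    else eval ops S P F v (expand cor cand t n \<phi>) \<le> eval ops S P F v (expand cor cand t m \<phi>))"
proof (induction \<phi> arbitrary: b v)
  case (Atom p ts)
  then show ?case by simp
next
  case (Conn c fs)
  have len: "length fs = ar c" using Conn.prems by simp
  have H: "if (if pol c i then b else \<not> b)
          then eval ops S P F v (expand cor cand t m (fs!i)) \<le> eval ops S P F v (expand cor cand t n (fs!i))
          else eval ops S P F v (expand cor cand t n (fs!i)) \<le> eval ops S P F v (expand cor cand t m (fs!i))"
    if i: "i < ar c" for i
  proof -
    have ow: "only_weak pol (if pol c i then b else \<not> b) (fs!i)"
      using only_weak_args_nth[of pol c 0 b fs i] Conn.prems(1) i len by simp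
    have "fs!i \<in> set fs" using i len by simp
    moreover have "wf_fm ar fa pa (fs!i)" using Conn.prems(2) i len by simp
    ultimately show ?thesis using Conn.IH ow by blast
  qed
  show ?case
  proof (cases b)
    case True
    have "ops c (map (\<lambda>\<phi>. eval ops S P F v (expand cor cand t m \<phi>)) fs) \<le> ops c (map (\<lambda>\<phi>. eval ops S P F v (expand cor cand t n \<phi>)) fs)"
      by (rule ops_mono[OF L]) (use len H True in \<open>auto split: if_splits\<close>)
    then show ?thesis using True by (simp add: comp_def)
  next
    case False
    have "ops c (map (\<lambda>\<phi>. eval ops S P F v (expand cor cand t n \<phi>)) fs) \<le> ops c (map (\<lambda>\<phi>. eval ops S P F v (expand cor cand t m \<phi>)) fs)"
      by (rule ops_mono[OF L]) (use len H False in \<open>auto split: if_splits\<close>)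
    then show ?thesis using False by (simp add: comp_def)
  qed
next
  case (Ex x \<phi>)
  then have b: b and ow: "only_weak pol b \<phi>" and wf: "wf_fm ar fa pa \<phi>" by auto
  have n: "n \<ge> 1" using m by simp
  have "(SUP i\<in>{1..m}. eval ops S P F (v(x := teval F v (t i))) (expand cor cand t m \<phi>))
        \<le> (SUP i\<in>{1..n}. eval ops S P F (v(x := teval F v (t i))) (expand cor cand t n \<phi>))"
  proof (rule SUP_least)
    fix i assume i: "i \<in> {1..m}"
    have "eval ops S P F (v(x := teval F v (t i))) (expand cor cand t m \<phi>)
       \<le> eval ops S P F (v(x := teval F v (t i))) (expand cor cand t n \<phi>)" using Ex.IH[OF ow wf] b by auto
    also have "\<dots> \<le> (SUP i\<in>{1..n}. eval ops S P F (v(x := teval F v (t i))) (expand cor cand t n \<phi>))"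
      using i m by (intro SUP_upper) auto
    finally show "eval ops S P F (v(x := teval F v (t i))) (expand cor cand t m \<phi>)
       \<le> (SUP i\<in>{1..n}. eval ops S P F (v(x := teval F v (t i))) (expand cor cand t n \<phi>))" .
  qed
  then show ?case using b by (simp del: expand.simps add: eval_expand_Ex[where ops=ops and cor=cor, OF L_sup[OF L] n]
     eval_expand_Ex[where ops=ops and cor=cor, OF L_sup[OF L] m(1)])
next
  case (All x \<phi>)
  then have b: "\<not> b" and ow: "only_weak pol b \<phi>" and wf: "wf_fm ar fa pa \<phi>" by auto
  have n: "n \<ge> 1" using m by simp
  have "(INF i\<in>{1..n}. eval ops S P F (v(x := teval F v (t i))) (expand cor cand t n \<phi>))
        \<le> (INF i\<in>{1..m}. eval ops S P F (v(x := teval F v (t i))) (expand cor cand t m \<phi>))"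
  proof (rule INF_greatest)
    fix i assume i: "i \<in> {1..m}"
    have "(INF i\<in>{1..n}. eval ops S P F (v(x := teval F v (t i))) (expand cor cand t n \<phi>))
       \<le> eval ops S P F (v(x := teval F v (t i))) (expand cor cand t n \<phi>)"
      using i m by (intro INF_lower) auto
    also have "\<dots> \<le> eval ops S P F (v(x := teval F v (t i))) (expand cor cand t m \<phi>)"
      using All.IH[OF ow wf] b by auto
    finally show "(INF i\<in>{1..n}. eval ops S P F (v(x := teval F v (t i))) (expand cor cand t n \<phi>))
       \<le> eval ops S P F (v(x := teval F v (t i))) (expand cor cand t m \<phi>)" .
  qed
  then show ?case using b by (simp del: expand.simps add: eval_expand_All[where ops=ops and cand=cand, OF L_inf[OF L] n]
     eval_expand_All[where ops=ops and cand=cand, OF L_inf[OF L] m(1)])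
qed

lemma eventual:
  assumes L: "L_lattice ar pol cor cand cimp ops" and S: "is_structure fa S F"
    and T: "\<forall>i\<ge>1. wf_trm fa (t i)"
    and cover: "\<forall>a\<in>S. \<exists>i\<ge>1. \<forall>w. teval F w (t i) = a"
  shows "only_weak pol b \<phi> \<Longrightarrow> wf_fm ar fa pa \<phi> \<Longrightarrow> range v \<subseteq> S \<Longrightarrow>
    eventually (\<lambda>n. eval ops S P F v (expand cor cand t n \<phi>) = eval ops S P F v \<phi>) sequentially"
proof (induction \<phi> arbitrary: b v)
  case (Atom p ts)
  then show ?case by simp
next
  case (Conn c fs)
  have "\<forall>\<psi>\<in>set fs. eventually (\<lambda>n. eval ops S P F v (expand cor cand t n \<psi>) = eval ops S P F v \<psi>) sequentially"
  proof
    fix \<psi> assume "\<psi> \<in> set fs"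
    then obtain i where i: "i < length fs" "\<psi> = fs!i" by (auto simp: in_set_conv_nth)
    have ow: "only_weak pol (if pol c i then b else \<not> b) \<psi>"
      using only_weak_args_nth[of pol c 0 b fs i] Conn.prems(1) i by simp
    show "eventually (\<lambda>n. eval ops S P F v (expand cor cand t n \<psi>) = eval ops S P F v \<psi>) sequentially"
      using Conn.IH[OF \<open>\<psi> \<in> set fs\<close> ow] Conn.prems \<open>\<psi> \<in> set fs\<close> by auto
  qed
  then have "eventually (\<lambda>n. \<forall>\<psi>\<in>set fs. eval ops S P F v (expand cor cand t n \<psi>) = eval ops S P F v \<psi>) sequentially"
    by (rule eventually_ball_finite[rotated]) simp
  then show ?case
    by (rule eventually_mono) (simp add: comp_def cong: map_cong)
next
  case (Ex x \<phi>)
  then have b: b and ow: "only_weak pol b \<phi>" and wf: "wf_fm ar fa pa \<phi>" and vS: "range v \<subseteq> S" by auto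
  define Y where "Y = (\<lambda>a. eval ops S P F (v(x := a)) \<phi>) ` S"
  have finY: "finite Y" by simp
  have ev: "\<forall>y\<in>Y. eventually (\<lambda>n. y \<le> eval ops S P F v (expand cor cand t n (Ex x \<phi>))) sequentially"
  proof
    fix y assume "y \<in> Y"
    then obtain a where a: "a \<in> S" "y = eval ops S P F (v(x := a)) \<phi>" by (auto simp: Y_def)
    then obtain i where i: "i \<ge> 1" "\<forall>w. teval F w (t i) = a" using cover by blast
    have "range (v(x := a)) \<subseteq> S" using a vS by auto
    then have "eventually (\<lambda>n. eval ops S P F (v(x := a)) (expand cor cand t n \<phi>) = eval ops S P F (v(x := a)) \<phi>) sequentially"
      using Ex.IH[OF ow wf] by blast
    moreover have "eventually (\<lambda>n. n \<ge> i) sequentially" by (rule eventually_ge_at_top)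
    ultimately show "eventually (\<lambda>n. y \<le> eval ops S P F v (expand cor cand t n (Ex x \<phi>))) sequentially"
    proof (rule eventually_elim2)
      fix n assume e: "eval ops S P F (v(x := a)) (expand cor cand t n \<phi>) = eval ops S P F (v(x := a)) \<phi>"
        and ni: "n \<ge> i"
      then have n: "n \<ge> 1" using i by simp
      have "y = eval ops S P F (v(x := teval F v (t i))) (expand cor cand t n \<phi>)" using e a i by simp
      also have "\<dots> \<le> (SUP j\<in>{1..n}. eval ops S P F (v(x := teval F v (t j))) (expand cor cand t n \<phi>))"
        using i ni by (intro SUP_upper) auto
      also have "\<dots> = eval ops S P F v (expand cor cand t n (Ex x \<phi>))"
        by (rule sym, rule eval_expand_Ex[where ops=ops and cor=cor, OF L_sup[OF L] n])
      finally show "y \<le> eval ops S P F v (expand cor cand t n (Ex x \<phi>))" .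
    qed
  qed
  have "eventually (\<lambda>n. \<forall>y\<in>Y. y \<le> eval ops S P F v (expand cor cand t n (Ex x \<phi>))) sequentially"
    using finY ev by (rule eventually_ball_finite)
  moreover have "eventually (\<lambda>n. n \<ge> 1) sequentially" by (rule eventually_ge_at_top)
  ultimately show ?case
  proof (rule eventually_elim2)
    fix n assume h: "\<forall>y\<in>Y. y \<le> eval ops S P F v (expand cor cand t n (Ex x \<phi>))" and n: "n \<ge> 1"
    have le: "eval ops S P F v (expand cor cand t n (Ex x \<phi>)) \<le> eval ops S P F v (Ex x \<phi>)"
      using sound[OF L S T n, of b "Ex x \<phi>" pa v P] Ex.prems b by simp
    have "eval ops S P F v (Ex x \<phi>) = Sup Y" by (simp add: Y_def)
    also have "\<dots> \<le> eval ops S P F v (expand cor cand t n (Ex x \<phi>))" using h by (intro Sup_least) auto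
    finally show "eval ops S P F v (expand cor cand t n (Ex x \<phi>)) = eval ops S P F v (Ex x \<phi>)"
      using le by (intro antisym)
  qed
next
  case (All x \<phi>)
  then have b: "\<not> b" and ow: "only_weak pol b \<phi>" and wf: "wf_fm ar fa pa \<phi>" and vS: "range v \<subseteq> S" by auto
  define Y where "Y = (\<lambda>a. eval ops S P F (v(x := a)) \<phi>) ` S"
  have finY: "finite Y" by simp
  have ev: "\<forall>y\<in>Y. eventually (\<lambda>n. eval ops S P F v (expand cor cand t n (All x \<phi>)) \<le> y) sequentially"
  proof
    fix y assume "y \<in> Y"
    then obtain a where a: "a \<in> S" "y = eval ops S P F (v(x := a)) \<phi>" by (auto simp: Y_def)
    then obtain i where i: "i \<ge> 1" "\<forall>w. teval F w (t i) = a" using cover by blast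
    have "range (v(x := a)) \<subseteq> S" using a vS by auto
    then have "eventually (\<lambda>n. eval ops S P F (v(x := a)) (expand cor cand t n \<phi>) = eval ops S P F (v(x := a)) \<phi>) sequentially"
      using All.IH[OF ow wf] by blast
    moreover have "eventually (\<lambda>n. n \<ge> i) sequentially" by (rule eventually_ge_at_top)
    ultimately show "eventually (\<lambda>n. eval ops S P F v (expand cor cand t n (All x \<phi>)) \<le> y) sequentially"
    proof (rule eventually_elim2)
      fix n assume e: "eval ops S P F (v(x := a)) (expand cor cand t n \<phi>) = eval ops S P F (v(x := a)) \<phi>"
        and ni: "n \<ge> i"
      then have n: "n \<ge> 1" using i by simp
      have "eval ops S P F v (expand cor cand t n (All x \<phi>)) =
         (INF j\<in>{1..n}. eval ops S P F (v(x := teval F v (t j))) (expand cor cand t n \<phi>))"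
        by (rule eval_expand_All[where ops=ops and cand=cand, OF L_inf[OF L] n])
      also have "\<dots> \<le> eval ops S P F (v(x := teval F v (t i))) (expand cor cand t n \<phi>)"
        using i ni by (intro INF_lower) auto
      also have "\<dots> = y" using e a i by simp
      finally show "eval ops S P F v (expand cor cand t n (All x \<phi>)) \<le> y" .
    qed
  qed
  have "eventually (\<lambda>n. \<forall>y\<in>Y. eval ops S P F v (expand cor cand t n (All x \<phi>)) \<le> y) sequentially"
    using finY ev by (rule eventually_ball_finite)
  moreover have "eventually (\<lambda>n. n \<ge> 1) sequentially" by (rule eventually_ge_at_top)
  ultimately show ?case
  proof (rule eventually_elim2)
    fix n assume h: "\<forall>y\<in>Y. eval ops S P F v (expand cor cand t n (All x \<phi>)) \<le> y" and n: "n \<ge> 1"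
    have le: "eval ops S P F v (All x \<phi>) \<le> eval ops S P F v (expand cor cand t n (All x \<phi>))"
      using sound[OF L S T n, of b "All x \<phi>" pa v P] All.prems b by simp
    have "eval ops S P F v (expand cor cand t n (All x \<phi>)) \<le> Inf Y" using h by (intro Inf_greatest) auto
    also have "\<dots> = eval ops S P F v (All x \<phi>)" by (simp add: Y_def)
    finally show "eval ops S P F v (expand cor cand t n (All x \<phi>)) = eval ops S P F v (All x \<phi>)"
      using le by (intro antisym)
  qed
qed

lemma compact_step:
  fixes h :: "nat \<Rightarrow> 'k \<Rightarrow> 'a::finite"
  assumes "infinite N" "finite B"
  shows "\<exists>N'\<subseteq>N. infinite N' \<and> (\<forall>n\<in>N'. \<forall>n'\<in>N'. \<forall>k\<in>B. h n k = h n' k)"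
proof -
  define f where "f n = (\<lambda>k. (k, h n k)) ` B" for n
  have "f ` N \<subseteq> Pow (B \<times> UNIV)" by (auto simp: f_def)
  moreover have "finite (Pow (B \<times> (UNIV :: 'a set)))" using assms(2) by simp
  ultimately have "finite (f ` N)" by (rule finite_subset)
  from pigeonhole_infinite[OF assms(1) this] obtain n0 where n0: "n0 \<in> N" "infinite {n\<in>N. f n = f n0}" by blast
  show ?thesis
  proof (intro exI conjI)
    show "{n\<in>N. f n = f n0} \<subseteq> N" by auto
    show "infinite {n\<in>N. f n = f n0}" by fact
    show "\<forall>n\<in>{n\<in>N. f n = f n0}. \<forall>n'\<in>{n\<in>N. f n = f n0}. \<forall>k\<in>B. h n k = h n' k"
      by (auto simp: f_def)
  qed
qed

lemma compact_seq:
  fixes h :: "nat \<Rightarrow> 'k \<Rightarrow> 'a::finite" and A :: "nat \<Rightarrow> 'k set"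
  assumes fin: "\<forall>m. finite (A m)"
  shows "\<exists>g. \<forall>m. \<exists>n\<ge>m. \<forall>k\<in>A m. g k = h n k"
proof -
  define A' where "A' m = (\<Union>j\<le>m. A j)" for m
  have finA': "finite (A' m)" for m using fin by (simp add: A'_def)
  define good where "good N B \<longleftrightarrow> infinite N \<and> (\<forall>n\<in>N. \<forall>n'\<in>N. \<forall>k\<in>B. h n k = h n' k)" for N B
  define chs where "chs N B = (SOME N'. N' \<subseteq> N \<and> good N' B)" for N B
  have ch: "chs N B \<subseteq> N \<and> good (chs N B) B" if "infinite N" "finite B" for N B
  proof -
    from compact_step[OF that, of h] have "\<exists>N'. N' \<subseteq> N \<and> good N' B" by (auto simp: good_def)
    then show ?thesis unfolding chs_def by (rule someI_ex)
  qed
  define Ns where "Ns = rec_nat (chs UNIV (A' 0)) (\<lambda>m N. chs N (A' (Suc m)))"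
  have Ns0: "Ns 0 = chs UNIV (A' 0)" and NsS: "Ns (Suc m) = chs (Ns m) (A' (Suc m))" for m
    by (simp_all add: Ns_def)
  have gNs: "good (Ns m) (A' m)" for m
  proof (induction m)
    case 0
    have "infinite (UNIV :: nat set)" by simp
    from ch[OF this finA'[of 0]] show ?case by (simp only: Ns0)
  next
    case (Suc m)
    then have "infinite (Ns m)" unfolding good_def by blast
    from ch[OF this finA'[of "Suc m"]] show ?case by (simp only: NsS)
  qed
  have dec1: "Ns (Suc m) \<subseteq> Ns m" for m
  proof -
    have "infinite (Ns m)" using gNs[of m] unfolding good_def by blast
    from ch[OF this finA'[of "Suc m"]] show ?thesis by (simp only: NsS)
  qed
  have dec: "Ns m' \<subseteq> Ns m" if "m \<le> m'" for m m'
    using that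
  proof (induction m' rule: dec_induct)
    case base then show ?case by simp
  next
    case (step k) then show ?case using dec1[of k] by blast
  qed
  have AA: "A m \<subseteq> A' m" for m by (auto simp: A'_def)
  define g where "g k = h (SOME n. n \<in> Ns (LEAST m. k \<in> A' m)) k" for k
  have key: "g k = h n k" if "k \<in> A' m" "n \<in> Ns m" for k m n
  proof -
    define m0 where "m0 = (LEAST m. k \<in> A' m)"
    have m0: "k \<in> A' m0" "m0 \<le> m" using that(1) unfolding m0_def by (auto intro: LeastI Least_le)
    have "infinite (Ns m0)" using gNs[of m0] unfolding good_def by blast
    then have "Ns m0 \<noteq> {}" by auto
    then have n0: "(SOME n. n \<in> Ns m0) \<in> Ns m0" by (simp add: some_in_eq)
    have "n \<in> Ns m0" using dec[OF m0(2)] that(2) by blast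
    have "g k = h (SOME n. n \<in> Ns m0) k" by (simp add: g_def m0_def)
    also have "\<dots> = h n k" using gNs[of m0] n0 \<open>n \<in> Ns m0\<close> m0(1) unfolding good_def by blast
    finally show ?thesis .
  qed
  show ?thesis
  proof (rule exI[of _ g], intro allI)
    fix m
    have "infinite (Ns m)" using gNs[of m] unfolding good_def by blast
    then have "\<not> (\<forall>n\<in>Ns m. n \<le> m)" using finite_nat_set_iff_bounded_le by blast
    then obtain n where "n \<in> Ns m" "\<not> n \<le> m" by blast
    then have "n \<in> Ns m" "n \<ge> m" by auto
    then show "\<exists>n\<ge>m. \<forall>k\<in>A m. g k = h n k" using key AA by blast
  qed
qed

lemma wf_tsubst: "wf_trm fa s0 \<Longrightarrow> wf_trm fa r \<Longrightarrow> wf_trm fa (tsubst x r s0)"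
  by (induction s0) auto

lemma tvars_tsubst: "tvars (tsubst x r s0) \<subseteq> (tvars s0 - {x}) \<union> tvars r"
  by (induction s0) auto

lemma atoms_expand:
  assumes T: "\<forall>i\<ge>1. wf_trm fa (t i) \<and> tvars (t i) = {}"
  shows "wf_fm ar fa pa \<phi> \<Longrightarrow> (p, ts) \<in> atoms (expand cor cand t n \<phi>) \<Longrightarrow> s \<in> set ts \<Longrightarrow>
    wf_trm fa s \<and> tvars s \<subseteq> fvars \<phi>"
proof (induction \<phi> arbitrary: p ts s)
  case (Atom q us)
  then show ?case by auto
next
  case (Conn c fs)
  then obtain \<psi> where "\<psi> \<in> set fs" "(p, ts) \<in> atoms (expand cor cand t n \<psi>)" by auto
  with Conn show ?case by fastforce
next
  case (Ex x \<phi>)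
  from Ex.prems(2) obtain i where i: "i \<in> set [1..<Suc n]"
    and a: "(p, ts) \<in> atoms (subst x (t i) (expand cor cand t n \<phi>))"
    by (auto simp: atoms_big_conn)
  then obtain ts0 where ts0: "(p, ts0) \<in> atoms (expand cor cand t n \<phi>)" "ts = map (tsubst x (t i)) ts0"
    by (auto simp: atoms_subst[OF qf_expand])
  then obtain s0 where s0: "s0 \<in> set ts0" "s = tsubst x (t i) s0" using Ex.prems(3) by auto
  have IH: "wf_trm fa s0 \<and> tvars s0 \<subseteq> fvars \<phi>" using Ex.IH[OF _ ts0(1) s0(1)] Ex.prems(1) by simp
  have ti: "wf_trm fa (t i)" "tvars (t i) = {}" using T i by auto
  show ?case using IH ti s0 wf_tsubst tvars_tsubst[of x "t i" s0] by auto
next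
  case (All x \<phi>)
  from All.prems(2) obtain i where i: "i \<in> set [1..<Suc n]"
    and a: "(p, ts) \<in> atoms (subst x (t i) (expand cor cand t n \<phi>))"
    by (auto simp: atoms_big_conn)
  then obtain ts0 where ts0: "(p, ts0) \<in> atoms (expand cor cand t n \<phi>)" "ts = map (tsubst x (t i)) ts0"
    by (auto simp: atoms_subst[OF qf_expand])
  then obtain s0 where s0: "s0 \<in> set ts0" "s = tsubst x (t i) s0" using All.prems(3) by auto
  have IH: "wf_trm fa s0 \<and> tvars s0 \<subseteq> fvars \<phi>" using All.IH[OF _ ts0(1) s0(1)] All.prems(1) by simp
  have ti: "wf_trm fa (t i)" "tvars (t i) = {}" using T i by auto
  show ?case using IH ti s0 wf_tsubst tvars_tsubst[of x "t i" s0] by auto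
qed

theorem mainTheorem16:
  fixes ar :: "'c \<Rightarrow> nat" and pol :: "'c \<Rightarrow> nat \<Rightarrow> bool" and cor cand cimp :: 'c
    and ops :: "'c \<Rightarrow> 'a::{finite,complete_lattice} list \<Rightarrow> 'a"
    and fa :: "'f \<Rightarrow> nat" and pa :: "'p \<Rightarrow> nat"
    and t :: "nat \<Rightarrow> 'f trm" and E :: "('c, 'p, 'f) fm"
  assumes "lo_signature ar pol cor cand cimp"
    and "L_lattice ar pol cor cand cimp ops"
    and "infinite (UNIV :: 'u set)"
    and "\<exists>f. fa f = 0"
    and "t ` {1..} = {s. wf_trm fa s \<and> closed_trm s}"
    and "wf_fm ar fa pa E"
    and "sentence E"
    and "only_weak pol True E"
  shows "valid1 TYPE('u) ops fa E \<longleftrightarrow>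
         (\<exists>n\<ge>1. valid1 TYPE('u) ops fa (expand cor cand t n E))"
proof -
  note L = assms(2)
  define H where "H = {s. wf_trm fa s \<and> closed_trm s}"
  have tH: "t i \<in> H" if "i \<ge> 1" for i using assms(5) that unfolding H_def by auto
  have T: "\<forall>i\<ge>1. wf_trm fa (t i)" using tH by (auto simp: H_def)
  have T2: "\<forall>i\<ge>1. wf_trm fa (t i) \<and> tvars (t i) = {}" using tH by (auto simp: H_def closed_trm_def)
  have Ht: "\<exists>i\<ge>1. t i = s" if "s \<in> H" for s using assms(5) that unfolding H_def by force
  show ?thesis
  proof
    assume vE: "valid1 TYPE('u) ops fa E"
    show "\<exists>n\<ge>1. valid1 TYPE('u) ops fa (expand cor cand t n E)"
    proof (rule ccontr)
      assume "\<not> (\<exists>n\<ge>1. valid1 TYPE('u) ops fa (expand cor cand t n E))"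
      then have nv: "\<not> valid1 TYPE('u) ops fa (expand cor cand t n E)" if "n \<ge> 1" for n
        using that by blast
      have "\<forall>n. \<exists>X :: 'u set \<times> ('p \<Rightarrow> 'u list \<Rightarrow> 'a) \<times> ('f \<Rightarrow> 'u list \<Rightarrow> 'u) \<times> (nat \<Rightarrow> 'u).
          n \<ge> 1 \<longrightarrow> is_structure fa (fst X) (fst (snd (snd X))) \<and> range (snd (snd (snd X))) \<subseteq> fst X \<and>
          eval ops (fst X) (fst (snd X)) (fst (snd (snd X))) (snd (snd (snd X))) (expand cor cand t n E) \<noteq> top"
      proof (intro allI)
        fix n
        show "\<exists>X :: 'u set \<times> ('p \<Rightarrow> 'u list \<Rightarrow> 'a) \<times> ('f \<Rightarrow> 'u list \<Rightarrow> 'u) \<times> (nat \<Rightarrow> 'u).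
          n \<ge> 1 \<longrightarrow> is_structure fa (fst X) (fst (snd (snd X))) \<and> range (snd (snd (snd X))) \<subseteq> fst X \<and>
          eval ops (fst X) (fst (snd X)) (fst (snd (snd X))) (snd (snd (snd X))) (expand cor cand t n E) \<noteq> top"
        proof (cases "n \<ge> 1")
          case False then show ?thesis by blast
        next
          case True
          then have "\<not> valid1 TYPE('u) ops fa (expand cor cand t n E)" by (rule nv)
          then obtain S :: "'u set" and P :: "'p \<Rightarrow> 'u list \<Rightarrow> 'a" and F v where
            "is_structure fa S F" "range v \<subseteq> S" "eval ops S P F v (expand cor cand t n E) \<noteq> top"
            unfolding valid1_def by blast
          then show ?thesis by (intro exI[of _ "(S, P, F, v)"]) simp
        qed
      qed
      from choice[OF this] obtain X :: "nat \<Rightarrow> 'u set \<times> ('p \<Rightarrow> 'u list \<Rightarrow> 'a) \<times> ('f \<Rightarrow> 'u list \<Rightarrow> 'u) \<times> (nat \<Rightarrow> 'u)" where X: "\<forall>n. n \<ge> 1 \<longrightarrow> is_structure fa (fst (X n)) (fst (snd (snd (X n)))) \<and> range (snd (snd (snd (X n)))) \<subseteq> fst (X n) \<and>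
          eval ops (fst (X n)) (fst (snd (X n))) (fst (snd (snd (X n)))) (snd (snd (snd (X n)))) (expand cor cand t n E) \<noteq> top"
        by (rule exE)
      define SS where "SS n = fst (X n)" for n
      define PP where "PP n = fst (snd (X n))" for n
      define FF where "FF n = fst (snd (snd (X n)))" for n
      define vv where "vv n = snd (snd (snd (X n)))" for n
      have W: "\<And>n. n \<ge> 1 \<Longrightarrow>
          is_structure fa (SS n) (FF n) \<and> range (vv n) \<subseteq> SS n \<and>
          eval ops (SS n) (PP n) (FF n) (vv n) (expand cor cand t n E) \<noteq> top"
        using X by (simp add: SS_def PP_def FF_def vv_def)
      obtain g :: "nat \<Rightarrow> 'u" where g: "inj g" using infinite_countable_subset[OF assms(3)] by blast
      define e where "e s = (LEAST i. 1 \<le> i \<and> t i = s)" for s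
      define j where "j s = g (e s)" for s
      have te: "t (e s) = s" if "s \<in> H" for s
        using LeastI_ex[OF Ht[OF that]] by (simp add: e_def)
      have injj: "inj_on j H"
      proof (rule inj_onI)
        fix s s' assume "s \<in> H" "s' \<in> H" "j s = j s'"
        then have "e s = e s'" using g by (simp add: j_def inj_eq)
        then show "s = s'" using te \<open>s \<in> H\<close> \<open>s' \<in> H\<close> by metis
      qed
      define inv0 where "inv0 = inv_into H j"
      have inv0j: "inv0 (j s) = s" if "s \<in> H" for s using injj that by (simp add: inv0_def)
      define S0 where "S0 = j ` H"
      define F0 where "F0 f us = j (Fn f (map inv0 us))" for f us
      obtain c0 where c0: "fa c0 = 0" using assms(4) by blast
      have c0H: "Fn c0 [] \<in> H" using c0 by (simp add: H_def closed_trm_def)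
      define v0 where "v0 = (\<lambda>_::nat. j (Fn c0 []))"
      have tevalH: "teval F0 w s = j s" if "s \<in> H" for s w
        using that
      proof (induction s)
        case (Var x) then show ?case by (simp add: H_def closed_trm_def)
      next
        case (Fn f ts)
        have sub: "r \<in> H" if "r \<in> set ts" for r
          using Fn.prems that by (auto simp: H_def closed_trm_def)
        then have m1: "map (teval F0 w) ts = map j ts" using Fn.IH by auto
        have m2: "map inv0 (map j ts) = ts" using sub inv0j by (induction ts) auto
        have "teval F0 w (Fn f ts) = F0 f (map (teval F0 w) ts)" by simp
        also have "\<dots> = F0 f (map j ts)" by (simp only: m1)
        also have "\<dots> = j (Fn f (map inv0 (map j ts)))" by (simp only: F0_def)
        also have "\<dots> = j (Fn f ts)" by (simp only: m2)
        finally show ?case .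
      qed
      have S0: "is_structure fa S0 F0"
        unfolding is_structure_def
      proof (intro conjI allI impI)
        show "S0 \<noteq> {}" using c0H by (auto simp: S0_def)
        fix f us assume a: "length us = fa f \<and> set us \<subseteq> S0"
        have "\<forall>u\<in>set us. inv0 u \<in> H" using a by (auto simp: S0_def inv0_def inv_into_into)
        then have "Fn f (map inv0 us) \<in> H" using a
          by (auto simp: H_def closed_trm_def)
        then show "F0 f us \<in> S0" by (simp add: F0_def S0_def)
      qed
      have v0S: "range v0 \<subseteq> S0" using c0H by (auto simp: v0_def S0_def)
      have cover: "\<forall>a\<in>S0. \<exists>i\<ge>1. \<forall>w. teval F0 w (t i) = a"
      proof
        fix a assume "a \<in> S0"
        then obtain s where s: "s \<in> H" "a = j s" by (auto simp: S0_def)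
        then obtain i where "i \<ge> 1" "t i = s" using Ht by blast
        then show "\<exists>i\<ge>1. \<forall>w. teval F0 w (t i) = a" using tevalH s by blast
      qed
      have atH: "s \<in> H" if "(p, ts) \<in> atoms (expand cor cand t n E)" "s \<in> set ts" for p ts s n
        using atoms_expand[OF T2 assms(6) that] assms(7)
        by (auto simp: H_def closed_trm_def sentence_def)
      define Q where "Q n p us = PP n p (map (\<lambda>u. teval (FF n) (vv n) (inv0 u)) us)" for n p us
      have Qn: "eval ops S0 (Q n) F0 v0 (expand cor cand t n E) \<noteq> top" if n: "n \<ge> 1" for n
      proof -
        have "eval ops S0 (Q n) F0 v0 (expand cor cand t n E) =
              eval ops (SS n) (PP n) (FF n) (vv n) (expand cor cand t n E)"
        proof (rule eval_qf_cong[OF qf_expand], safe)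
          fix p ts assume pt: "(p, ts) \<in> atoms (expand cor cand t n E)"
          have "map (\<lambda>u. teval (FF n) (vv n) (inv0 u)) (map (teval F0 v0) ts) = map (teval (FF n) (vv n)) ts"
            using atH[OF pt] tevalH inv0j by auto
          then show "Q n p (map (teval F0 v0) ts) = PP n p (map (teval (FF n) (vv n)) ts)"
            unfolding Q_def by (simp only:)
        qed
        then show ?thesis using W[OF n] by simp
      qed
      define A where "A m = (\<lambda>(p, ts). (p, map (teval F0 v0) ts)) ` atoms (expand cor cand t m E)" for m
      have finA: "\<forall>m. finite (A m)" by (simp add: A_def finite_atoms)
      obtain gg where gg: "\<forall>m. \<exists>n\<ge>m. \<forall>k\<in>A m. gg k = (\<lambda>(p, us). Q n p us) k"
        using compact_seq[OF finA, of "\<lambda>n (p, us). Q n p us"] by blast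
      define Qg where "Qg p us = gg (p, us)" for p us
      have Qg: "eval ops S0 Qg F0 v0 (expand cor cand t m E) \<noteq> top" if m: "m \<ge> 1" for m
      proof
        assume top: "eval ops S0 Qg F0 v0 (expand cor cand t m E) = top"
        obtain n where n: "n \<ge> m" "\<forall>k\<in>A m. gg k = (\<lambda>(p, us). Q n p us) k" using gg by blast
        have "eval ops S0 Qg F0 v0 (expand cor cand t m E) = eval ops S0 (Q n) F0 v0 (expand cor cand t m E)"
        proof (rule eval_qf_cong[OF qf_expand], safe)
          fix p ts assume pt: "(p, ts) \<in> atoms (expand cor cand t m E)"
          then have "(p, map (teval F0 v0) ts) \<in> A m" by (force simp: A_def)
          then show "Qg p (map (teval F0 v0) ts) = Q n p (map (teval F0 v0) ts)"
            using n(2) by (auto simp: Qg_def)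
        qed
        also have "\<dots> \<le> eval ops S0 (Q n) F0 v0 (expand cor cand t n E)"
          using mono_n[OF L m n(1), of True E fa pa S0 "Q n" F0 v0] assms(6,8) by simp
        finally have "eval ops S0 (Q n) F0 v0 (expand cor cand t n E) = top" using top by (simp add: top_le)
        then show False using Qn[of n] m n(1) by simp
      qed
      have "eventually (\<lambda>n. eval ops S0 Qg F0 v0 (expand cor cand t n E) = eval ops S0 Qg F0 v0 E) sequentially"
        using eventual[OF L S0 T cover assms(8,6) v0S] .
      then obtain N where N: "\<forall>n\<ge>N. eval ops S0 Qg F0 v0 (expand cor cand t n E) = eval ops S0 Qg F0 v0 E"
        by (auto simp: eventually_sequentially)
      have "eval ops S0 Qg F0 v0 E = top" using vE S0 v0S by (auto simp: valid1_def)
      then show False using N[rule_format, of "max N 1"] Qg[of "max N 1"] by simp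
    qed
  next
    assume "\<exists>n\<ge>1. valid1 TYPE('u) ops fa (expand cor cand t n E)"
    then obtain n where n: "n \<ge> 1" and vn: "valid1 TYPE('u) ops fa (expand cor cand t n E)" by blast
    show "valid1 TYPE('u) ops fa E"
      unfolding valid1_def
    proof (intro allI impI)
      fix S :: "'u set" and P :: "'p \<Rightarrow> 'u list \<Rightarrow> 'a" and F :: "'f \<Rightarrow> 'u list \<Rightarrow> 'u" and v :: "nat \<Rightarrow> 'u"
      assume a: "is_structure fa S F \<and> range v \<subseteq> S"
      then have "eval ops S P F v (expand cor cand t n E) = top" using vn by (auto simp: valid1_def)
      moreover have "eval ops S P F v (expand cor cand t n E) \<le> eval ops S P F v E"
        using sound[OF L _ T n, of S F True E pa v P] a assms(6,8) by simp
      ultimately show "eval ops S P F v E = top" by (simp add: top_le)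
    qed
  qed
qed

end
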